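(* There is an absolute constant $c>0$ such that for every $\varepsilon>0$ there exist a finite ground set $E$, a downward-closed family $\mathcal{F}\subseteq 2^E$ and a product distribution $D$ of the element weights with $\textsf{EoR}(\mathcal{F},D)\le\varepsilon$ and $\textsf{RoE}(\mathcal{F},D)\ge c$ (i.e. $\textsf{RoE}(\mathcal{F},D)\in\Omega(1)$).
   Context: Setting (prophet inequality under a downward-closed constraint). $E$ is a finite ground set and $\mathcal{F}\subseteq 2^E$ is downward-closed (if $S\in\mathcal{F}$ and $T\subseteq S$ then $T\in\mathcal{F}$). Each $e\in E$ has a nonnegative random weight $w_e\sim D_e$, independently across elements, and $D=\times_{e\in E}D_e$ is the product distribution. The elements arrive one by one in a fixed order, each revealed together with its realized weight; an online algorithm (which knows $\mathcal{F}$ and $D$ and may be randomized) must decide immediately and irrevocably upon each arrival whether to accept the element, keeping the accepted set in $\mathcal{F}$ at all times. Let $f(\boldsymbol{w})=\max_{S\in\mathcal{F}}\sum_{e\in S}w_e$ be the offline optimum, and let $\textsf{ALG}(\boldsymbol{w})$ be the set chosen by algorithm $\textsf{ALG}$, with value $\boldsymbol{w}(\textsf{ALG}(\boldsymbol{w}))=\sum_{e\in\textsf{ALG}(\boldsymbol{w})}w_e$. Define $\textsf{EoR}(\mathcal{F},D,\textsf{ALG})=\mathbf{E}[\boldsymbol{w}(\textsf{ALG}(\boldsymbol{w}))/f(\boldsymbol{w})]$ and $\textsf{RoE}(\mathcal{F},D,\textsf{ALG})=\mathbf{E}[\boldsymbol{w}(\textsf{ALG}(\boldsymbol{w}))]/\mathbf{E}[f(\boldsymbol{w})]$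 (expectations over $\boldsymbol{w}\sim D$ and the algorithm's randomness); $\textsf{EoR}(\mathcal{F},D)=\sup_{\textsf{ALG}}\textsf{EoR}(\mathcal{F},D,\textsf{ALG})$ and $\textsf{RoE}(\mathcal{F},D)=\sup_{\textsf{ALG}}\textsf{RoE}(\mathcal{F},D,\textsf{ALG})$. *)

theory Defs
  imports "HOL-Probability.Probability"
begin

text \<open>Ground set E = {0..<n}; elements arrive in the order 0, 1, ..., n-1.
  D e is the weight distribution of element e (independent across elements).
  A (randomized) online algorithm is given in behavioural form: a function q
  mapping (weights revealed so far, set accepted so far, current weight) to the
  probability of accepting the current element. An acceptance that would leave
  the family F is turned into a rejection, so the accepted set stays in F.\<close>

definition downward_closed :: "nat set set \<Rightarrow> bool" where
  "downward_closed F \<longleftrightarrow> (\<forall>S\<in>F. \<forall>T. T \<subseteq> S \<longrightarrow> T \<in> F)"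

definition valid_instance :: "nat \<Rightarrow> nat set set \<Rightarrow> (nat \<Rightarrow> real pmf) \<Rightarrow> bool" where
  "valid_instance n F D \<longleftrightarrow>
     F \<subseteq> Pow {..<n} \<and> {} \<in> F \<and> downward_closed F \<and>
     (\<forall>e<n. finite (set_pmf (D e)) \<and> (\<forall>x\<in>set_pmf (D e). 0 \<le> x))"

type_synonym online_alg = "real list \<Rightarrow> nat set \<Rightarrow> real \<Rightarrow> real"

primrec run :: "online_alg \<Rightarrow> nat set set \<Rightarrow> (nat \<Rightarrow> real pmf) \<Rightarrow> nat
                 \<Rightarrow> (real list \<times> nat set) pmf" where
  "run q F D 0 = return_pmf ([], {})"
| "run q F D (Suc i) =
     bind_pmf (run q F D i) (\<lambda>(ws, S).
       bind_pmf (D i) (\<lambda>w.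
         map_pmf (\<lambda>b. (ws @ [w], if b \<and> insert i S \<in> F then insert i S else S))
                 (bernoulli_pmf (q ws S w))))"

primrec wdist :: "(nat \<Rightarrow> real pmf) \<Rightarrow> nat \<Rightarrow> real list pmf" where
  "wdist D 0 = return_pmf []"
| "wdist D (Suc i) = bind_pmf (wdist D i) (\<lambda>ws. map_pmf (\<lambda>w. ws @ [w]) (D i))"

definition setval :: "real list \<Rightarrow> nat set \<Rightarrow> real" where
  "setval ws S = (\<Sum>j\<in>S. ws ! j)"

definition opt :: "nat set set \<Rightarrow> real list \<Rightarrow> real" where
  "opt F ws = Max ((\<lambda>S. setval ws S) ` F)"

text \<open>Ratio ALG/OPT, with the convention 0/0 = 1 (when OPT = 0, ALG = 0 is optimal).\<close>
definition ratio :: "real \<Rightarrow> real \<Rightarrow> real" where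
  "ratio a b = (if b = 0 then 1 else a / b)"

definition EoR_alg :: "nat \<Rightarrow> nat set set \<Rightarrow> (nat \<Rightarrow> real pmf) \<Rightarrow> online_alg \<Rightarrow> real" where
  "EoR_alg n F D q = measure_pmf.expectation (run q F D n)
       (\<lambda>(ws, S). ratio (setval ws S) (opt F ws))"

definition RoE_alg :: "nat \<Rightarrow> nat set set \<Rightarrow> (nat \<Rightarrow> real pmf) \<Rightarrow> online_alg \<Rightarrow> real" where
  "RoE_alg n F D q = measure_pmf.expectation (run q F D n) (\<lambda>(ws, S). setval ws S)
       / measure_pmf.expectation (wdist D n) (opt F)"

definition EoR :: "nat \<Rightarrow> nat set set \<Rightarrow> (nat \<Rightarrow> real pmf) \<Rightarrow> real" where
  "EoR n F D = (SUP q. EoR_alg n F D q)"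

definition RoE :: "nat \<Rightarrow> nat set set \<Rightarrow> (nat \<Rightarrow> real pmf) \<Rightarrow> real" where
  "RoE n F D = (SUP q. RoE_alg n F D q)"

end

theory Submission
  imports Defs
begin


lemma fin_bern: "finite (set_pmf (bernoulli_pmf x))"
  by (rule finite_subset[OF subset_UNIV]) simp

lemma fin_exp_bind:
  fixes f :: "'b \<Rightarrow> real"
  assumes "finite (set_pmf M)" "\<And>x. x \<in> set_pmf M \<Longrightarrow> finite (set_pmf (N x))"
  shows "measure_pmf.expectation (bind_pmf M N) f = measure_pmf.expectation M (\<lambda>x. measure_pmf.expectation (N x) f)"
proof -
  have "measure_pmf.expectation (bind_pmf M N) f = (\<Sum>a\<in>set_pmf M. pmf M a *\<^sub>R measure_pmf.expectation (N a) f)"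
    using assms by (intro pmf_expectation_bind) auto
  also have "\<dots> = measure_pmf.expectation M (\<lambda>x. measure_pmf.expectation (N x) f)"
    using assms by (subst integral_measure_pmf[of "set_pmf M"]) auto
  finally show ?thesis .
qed

lemma exp_mono_pmf:
  fixes f g :: "'a \<Rightarrow> real"
  assumes "finite (set_pmf M)" "\<And>x. x \<in> set_pmf M \<Longrightarrow> f x \<le> g x"
  shows "measure_pmf.expectation M f \<le> measure_pmf.expectation M g"
  using assms by (intro integral_mono_AE) (auto simp: AE_measure_pmf_iff intro: integrable_measure_pmf_finite)

lemma exp_le_const:
  fixes f :: "'a \<Rightarrow> real"
  assumes "\<And>x. x \<in> set_pmf M \<Longrightarrow> f x \<le> c" "finite (set_pmf M)"
  shows "measure_pmf.expectation M f \<le> c"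
proof -
  have "measure_pmf.expectation M f \<le> measure_pmf.expectation M (\<lambda>_. c)"
    using assms by (intro exp_mono_pmf) auto
  then show ?thesis by simp
qed

lemma run_fin:
  assumes "\<And>j. j < i \<Longrightarrow> finite (set_pmf (D j))"
  shows "finite (set_pmf (run q F D i))"
  using assms
proof (induction i)
  case 0 then show ?case by simp
next
  case (Suc i)
  have "finite (set_pmf (run q F D i))" using Suc by auto
  moreover have "finite (set_pmf (D i))" using Suc by auto
  ultimately show ?case by (auto simp: set_bind_pmf fin_bern split: prod.splits)
qed

lemma run_inv:
  assumes "{} \<in> F" "x \<in> set_pmf (run q F D i)"
  shows "length (fst x) = i \<and> snd x \<subseteq> {..<i} \<and> snd x \<in> F \<and> (\<forall>j<i. fst x ! j \<in> set_pmf (D j))"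
  using assms(2)
proof (induction i arbitrary: x)
  case 0 then show ?case using assms(1) by simp
next
  case (Suc i)
  then obtain ws S w b where x: "(ws, S) \<in> set_pmf (run q F D i)" "w \<in> set_pmf (D i)"
    "x = (ws @ [w], if b \<and> insert i S \<in> F then insert i S else S)"
    by (auto simp: set_bind_pmf split: prod.splits)
  from Suc.IH[OF x(1)] have IH: "length ws = i" "S \<subseteq> {..<i}" "S \<in> F" "\<forall>j<i. ws ! j \<in> set_pmf (D j)" by auto
  show ?case using IH x(2,3) by (auto simp: nth_append less_Suc_eq)
qed

lemma wdist_fin:
  assumes "\<And>j. j < i \<Longrightarrow> finite (set_pmf (D j))"
  shows "finite (set_pmf (wdist D i))"
  using assms by (induction i) (auto simp: set_bind_pmf)

lemma wdist_inv:
  assumes "ws \<in> set_pmf (wdist D i)"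
  shows "length ws = i \<and> (\<forall>j<i. ws ! j \<in> set_pmf (D j))"
  using assms
  by (induction i arbitrary: ws) (auto simp: set_bind_pmf nth_append less_Suc_eq)

lemma run_marg: "map_pmf fst (run q F D i) = wdist D i"
proof (induction i)
  case 0 then show ?case by simp
next
  case (Suc i)
  have "map_pmf fst (run q F D (Suc i)) =
     bind_pmf (run q F D i) (\<lambda>x. map_pmf (\<lambda>w. fst x @ [w]) (D i))"
    by (auto simp: map_bind_pmf map_pmf_comp intro!: bind_pmf_cong split: prod.splits) (simp add: map_pmf_def)
  also have "\<dots> = bind_pmf (map_pmf fst (run q F D i)) (\<lambda>ws. map_pmf (\<lambda>w. ws @ [w]) (D i))"
    by (simp add: bind_map_pmf)
  finally show ?case using Suc by simp
qed

lemma run_exp_fst: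
  fixes g :: "real list \<Rightarrow> real"
  shows "measure_pmf.expectation (run q F D i) (\<lambda>x. g (fst x)) = measure_pmf.expectation (wdist D i) g"
proof -
  have "measure_pmf.expectation (map_pmf fst (run q F D i)) g = measure_pmf.expectation (run q F D i) (\<lambda>x. g (fst x))"
    by simp
  then show ?thesis by (simp add: run_marg)
qed

lemma run_step_exp:
  fixes f :: "real list \<times> nat set \<Rightarrow> real"
  assumes "\<And>j. j \<le> i \<Longrightarrow> finite (set_pmf (D j))"
  shows "measure_pmf.expectation (run q F D (Suc i)) f =
    measure_pmf.expectation (run q F D i) (\<lambda>(ws,S). measure_pmf.expectation (D i) (\<lambda>w.
       measure_pmf.expectation (bernoulli_pmf (q ws S w)) (\<lambda>b. f (ws @ [w], if b \<and> insert i S \<in> F then insert i S else S))))"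
proof -
  have fr: "finite (set_pmf (run q F D i))" using assms by (intro run_fin) auto
  show ?thesis
    apply (simp only: run.simps)
    apply (subst fin_exp_bind[OF fr])
    subgoal using assms by (auto simp: set_bind_pmf fin_bern split: prod.splits)
    apply (rule arg_cong[where f="measure_pmf.expectation (run q F D i)"])
    apply (rule ext)
    apply (clarsimp split: prod.splits)
    apply (subst fin_exp_bind)
    using assms by (auto simp: fin_bern)
qed



lemma div_blk: "0 < (s::nat) \<Longrightarrow> (k div s = b) = (b * s \<le> k \<and> k < b * s+s)"
  by (metis add.commute div_nat_eqI dividend_less_times_div mult.commute
    mult_Suc times_div_less_eq_dividend)

lemma blk_card: "0 < (s::nat) \<Longrightarrow> card {j\<in>{Suc i..<N}. j div s = i div s} \<le> s - 1"
proof -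
  assume s: "0 < s"
  have "{j\<in>{Suc i..<N}. j div s = i div s} \<subseteq> {(i div s) * s..<(i div s) * s+s} - {i}"
    using div_blk[OF s] by auto
  then have "card {j\<in>{Suc i..<N}. j div s = i div s} \<le> card ({(i div s) * s..<(i div s) * s+s} - {i})"
    by (intro card_mono) auto
  also have "\<dots> = s - 1" using div_blk[OF s, of i "i div s"] by simp
  finally show ?thesis .
qed

lemma cnt_step:
  assumes "i < N"
  shows "card {j\<in>{i..<N}. j div s = b} = card {j\<in>{Suc i..<N}. j div s = b} + (if i div s = b then 1 else 0)"
proof -
  have "{j\<in>{i..<N}. j div s = b} = (if i div s = b then insert i {j\<in>{Suc i..<N}. j div s = b} else {j\<in>{Suc i..<N}. j div s = b})"
    using assms by (auto simp: Suc_le_eq order.order_iff_strict)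
  then show ?thesis by simp
qed

definition blkF :: "nat \<Rightarrow> nat \<Rightarrow> nat set set" where
  "blkF s m = {S. (\<exists>b<m. S \<subseteq> {b * s..<b * s+s}) \<or> S \<subseteq> {m * s}}"

definition dB :: "real \<Rightarrow> real pmf" where
  "dB p = map_pmf (\<lambda>b. if b then 1 else 0) (bernoulli_pmf p)"

definition Dz :: "real \<Rightarrow> real \<Rightarrow> real pmf" where
  "Dz r H = map_pmf (\<lambda>b. if b then H else 0) (bernoulli_pmf r)"

definition Dinst :: "nat \<Rightarrow> nat \<Rightarrow> real \<Rightarrow> real \<Rightarrow> real \<Rightarrow> nat \<Rightarrow> real pmf" where
  "Dinst s m p r H = (\<lambda>e. if e < m * s then dB p else Dz r H)"

lemma set_dB: "set_pmf (dB p) \<subseteq> {0,1}" by (auto simp: dB_def)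
lemma set_Dz: "set_pmf (Dz r H) \<subseteq> {0,H}" by (auto simp: Dz_def)
lemma fin_dB: "finite (set_pmf (dB p))" using set_dB by (rule finite_subset) simp
lemma fin_Dz: "finite (set_pmf (Dz r H))" using set_Dz by (rule finite_subset) simp
lemma fin_Dinst: "finite (set_pmf (Dinst s m p r H j))" by (simp add: Dinst_def fin_dB fin_Dz)

lemma exp_dB: "0 \<le> p \<Longrightarrow> p \<le> 1 \<Longrightarrow> measure_pmf.expectation (dB p) f = f 1 * p + f 0 * (1 - p)"
  by (simp add: dB_def)
lemma exp_Dz: "0 \<le> r \<Longrightarrow> r \<le> 1 \<Longrightarrow> measure_pmf.expectation (Dz r H) f = f H * r + f 0 * (1 - r)"
  by (simp add: Dz_def)

lemma blkF_fin: "blkF s m \<subseteq> Pow {..<m * s+1}"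
proof
  fix S assume "S \<in> blkF s m"
  then consider b where "b < m" "S \<subseteq> {b * s..<b * s+s}" | "S \<subseteq> {m * s}" unfolding blkF_def by auto
  then show "S \<in> Pow {..<m * s+1}"
  proof cases
    case 1
    have "b * s+s \<le> m * s" using 1(1) by (metis Suc_leI mult_Suc mult_le_mono1 add.commute)
    then show ?thesis using 1 by auto
  qed auto
qed

lemma valid: "0 \<le> H \<Longrightarrow> valid_instance (m * s+1) (blkF s m) (Dinst s m p r H)"
  unfolding valid_instance_def
proof (intro conjI allI impI ballI)
  show "blkF s m \<subseteq> Pow {..<m * s + 1}" by (rule blkF_fin)
  show "{} \<in> blkF s m" by (simp add: blkF_def)
  show "downward_closed (blkF s m)" unfolding downward_closed_def blkF_def by blast
  fix e show "finite (set_pmf (Dinst s m p r H e))" by (rule fin_Dinst)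
  fix x assume "0 \<le> H" "x \<in> set_pmf (Dinst s m p r H e)"
  then show "0 \<le> x" using set_dB[of p] set_Dz[of r H] by (auto simp: Dinst_def split: if_splits)
qed



lemma setval_app: "S \<subseteq> {..<length ws} \<Longrightarrow> setval (ws @ [w]) S = setval ws S"
  unfolding setval_def by (intro sum.cong) (auto simp: nth_append)

lemma setval_app_ins: "S \<subseteq> {..<length ws} \<Longrightarrow> setval (ws @ [w]) (insert (length ws) S) = w + setval ws S"
proof -
  assume a: "S \<subseteq> {..<length ws}"
  then have "finite S" "length ws \<notin> S" using finite_subset by auto
  then have "setval (ws @ [w]) (insert (length ws) S) = w + setval (ws @ [w]) S"
    unfolding setval_def by simp
  then show ?thesis using setval_app[OF a] by simp
qed

lemma blk_struct:
  assumes s: "0 < s" and S: "S \<in> blkF s m" "S \<noteq> {}" "S \<subseteq> {..<i}" and i: "i < m * s"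
  shows "\<exists>b<m. (\<forall>j. (\<exists>k\<in>S. j div s = k div s) = (j div s = b)) \<and> (insert i S \<in> blkF s m \<longleftrightarrow> i div s = b)"
proof -
  have "\<not> S \<subseteq> {m * s}" using S i by auto
  then obtain b where b: "b < m" "S \<subseteq> {b * s..<b * s+s}" using S(1) unfolding blkF_def by auto
  then have kb: "\<forall>k\<in>S. k div s = b" using div_blk[OF s] by auto
  have 1: "\<forall>j. (\<exists>k\<in>S. j div s = k div s) = (j div s = b)" using kb S(2) by auto
  have 2: "insert i S \<in> blkF s m \<longleftrightarrow> i div s = b"
  proof
    assume "insert i S \<in> blkF s m"
    then consider b' where "b' < m" "insert i S \<subseteq> {b' * s..<b' * s+s}" | "insert i S \<subseteq> {m * s}"
      unfolding blkF_def by auto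
    then show "i div s = b"
    proof cases
      case 1
      then have "\<forall>k\<in>insert i S. k div s = b'" using div_blk[OF s] by auto
      then show ?thesis using kb S(2) by auto
    next
      case 2 then show ?thesis using i by auto
    qed
  next
    assume "i div s = b"
    then have "insert i S \<subseteq> {b * s..<b * s+s}" using b div_blk[OF s, of i b] by auto
    then show "insert i S \<in> blkF s m" using b unfolding blkF_def by auto
  qed
  show ?thesis using 1 2 b by auto
qed

lemma single_in: "0 < s \<Longrightarrow> i < m * s \<Longrightarrow> {i} \<in> blkF s m"
proof -
  assume s: "0 < s" and i: "i < m * s"
  have "i div s < m" using i s by (simp add: div_less_iff_less_mult)
  moreover have "{i} \<subseteq> {(i div s) * s..<(i div s) * s+s}" using div_blk[OF s, of i "i div s"] by auto
  ultimately show ?thesis unfolding blkF_def by blast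
qed

definition Psi :: "nat \<Rightarrow> nat \<Rightarrow> real \<Rightarrow> nat \<Rightarrow> real list \<times> nat set \<Rightarrow> real" where
  "Psi s m p i x = (if snd x = {} then 1 + real (s - 1) * p
      else setval (fst x) (snd x) + p * real (card {j\<in>{i..<m * s}. \<exists>k\<in>snd x. j div s = k div s}))"

lemma pot_step:
  assumes s: "0 < s" and p: "0 \<le> p" "p \<le> 1" and i: "i < m * s"
    and x: "(ws, S) \<in> set_pmf (run q (blkF s m) (Dinst s m p r H) i)"
  shows "measure_pmf.expectation (Dinst s m p r H i) (\<lambda>w.
       measure_pmf.expectation (bernoulli_pmf (q ws S w)) (\<lambda>c. Psi s m p (Suc i) (ws @ [w],
          if c \<and> insert i S \<in> blkF s m then insert i S else S))) \<le> Psi s m p i (ws, S)"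
proof -
  have Di: "Dinst s m p r H i = dB p" using i by (simp add: Dinst_def)
  have inv: "length ws = i" "S \<subseteq> {..<i}" "S \<in> blkF s m"
    using run_inv[OF _ x] by (auto simp: blkF_def)
  show ?thesis
  proof (cases "S = {}")
    case True
    show ?thesis unfolding Di
    proof (rule exp_le_const[OF _ fin_dB])
      fix w assume w: "w \<in> set_pmf (dB p)"
      then have w1: "w \<le> 1" using set_dB[of p] by auto
      show "measure_pmf.expectation (bernoulli_pmf (q ws S w)) (\<lambda>c. Psi s m p (Suc i) (ws @ [w],
          if c \<and> insert i S \<in> blkF s m then insert i S else S)) \<le> Psi s m p i (ws, S)"
      proof (rule exp_le_const[OF _ fin_bern])
        fix c :: bool
        have "card {j\<in>{Suc i..<m * s}. j div s = i div s} \<le> s - 1" by (rule blk_card[OF s])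
        then have "p * real (card {j\<in>{Suc i..<m * s}. j div s = i div s}) \<le> p * real (s - 1)"
          using p by (intro mult_left_mono) auto
        moreover have "setval (ws @ [w]) {i} = w" using inv(1)[symmetric] by (simp add: setval_def)
        ultimately show "Psi s m p (Suc i) (ws @ [w], if c \<and> insert i S \<in> blkF s m then insert i S else S)
           \<le> Psi s m p i (ws, S)"
          using True w1 by (auto simp: Psi_def algebra_simps)
      qed
    qed
  next
    case False
    obtain b where b: "b < m" "\<forall>j. (\<exists>k\<in>S. j div s = k div s) = (j div s = b)"
       "insert i S \<in> blkF s m \<longleftrightarrow> i div s = b"
      using blk_struct[OF s inv(3) False inv(2) i] by blast
    define g where "g w = setval ws S + (if i div s = b then w else 0)
        + p * real (card {j\<in>{Suc i..<m * s}. j div s = b})" for w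
    have "measure_pmf.expectation (dB p) (\<lambda>w.
       measure_pmf.expectation (bernoulli_pmf (q ws S w)) (\<lambda>c. Psi s m p (Suc i) (ws @ [w],
          if c \<and> insert i S \<in> blkF s m then insert i S else S))) \<le> measure_pmf.expectation (dB p) g"
    proof (rule exp_mono_pmf[OF fin_dB])
      fix w assume w: "w \<in> set_pmf (dB p)"
      then have w0: "0 \<le> w" using set_dB[of p] by auto
      show "measure_pmf.expectation (bernoulli_pmf (q ws S w)) (\<lambda>c. Psi s m p (Suc i) (ws @ [w],
          if c \<and> insert i S \<in> blkF s m then insert i S else S)) \<le> g w"
      proof (rule exp_le_const[OF _ fin_bern])
        fix c :: bool
        have e1: "setval (ws @ [w]) S = setval ws S" using inv by (intro setval_app) auto
        have e2: "setval (ws @ [w]) (insert i S) = w + setval ws S" using inv setval_app_ins[of S ws w] by auto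
        have ee: "(\<exists>k\<in>insert i S. j div s = k div s) = (j div s = b)" if "i div s = b" for j
          using b(2) that by auto
        show "Psi s m p (Suc i) (ws @ [w], if c \<and> insert i S \<in> blkF s m then insert i S else S) \<le> g w"
          using False e1 e2 b w0 ee unfolding g_def Psi_def by (auto simp: algebra_simps)
      qed
    qed
    also have "measure_pmf.expectation (dB p) g = Psi s m p i (ws, S)"
      unfolding exp_dB[OF p] g_def Psi_def using False b(2) cnt_step[OF i, of s b]
      by (auto simp: algebra_simps)
    finally show ?thesis unfolding Di .
  qed
qed

lemma pot:
  assumes s: "0 < s" and p: "0 \<le> p" "p \<le> 1" and i: "i \<le> m * s"
  shows "measure_pmf.expectation (run q (blkF s m) (Dinst s m p r H) i) (Psi s m p i) \<le> 1 + real (s - 1) * p"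
  using i
proof (induction i)
  case 0 then show ?case by (simp add: Psi_def)
next
  case (Suc i)
  have fr: "finite (set_pmf (run q (blkF s m) (Dinst s m p r H) i))" by (intro run_fin fin_Dinst)
  have "measure_pmf.expectation (run q (blkF s m) (Dinst s m p r H) (Suc i)) (Psi s m p (Suc i))
     \<le> measure_pmf.expectation (run q (blkF s m) (Dinst s m p r H) i) (Psi s m p i)"
    apply (subst run_step_exp)
     apply (rule fin_Dinst)
    apply (rule exp_mono_pmf[OF fr])
    using pot_step[OF s p, of i] Suc.prems by (auto split: prod.splits)
  then show ?case using Suc by simp
qed

lemma alg_bound:
  assumes s: "0 < s" and p: "0 \<le> p" "p \<le> 1"
  shows "measure_pmf.expectation (run q (blkF s m) (Dinst s m p r H) (m * s)) (\<lambda>x. setval (fst x) (snd x)) \<le> 1 + real (s - 1) * p"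
proof -
  have fr: "finite (set_pmf (run q (blkF s m) (Dinst s m p r H) (m * s)))" by (intro run_fin fin_Dinst)
  have "measure_pmf.expectation (run q (blkF s m) (Dinst s m p r H) (m * s)) (\<lambda>x. setval (fst x) (snd x))
     \<le> measure_pmf.expectation (run q (blkF s m) (Dinst s m p r H) (m * s)) (Psi s m p (m * s))"
    using p by (intro exp_mono_pmf[OF fr]) (auto simp: Psi_def setval_def)
  also have "\<dots> \<le> 1 + real (s - 1) * p" by (rule pot[OF s p]) simp
  finally show ?thesis .
qed



lemma exp_cong_pmf:
  fixes f g :: "'a \<Rightarrow> real"
  assumes "\<And>x. x \<in> set_pmf M \<Longrightarrow> f x = g x"
  shows "measure_pmf.expectation M f = measure_pmf.expectation M g"
  using assms by (intro integral_cong_AE) (auto simp: AE_measure_pmf_iff)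

lemma wdist_cong: "(\<And>j. j < i \<Longrightarrow> D j = D' j) \<Longrightarrow> wdist D i = wdist D' i"
  by (induction i) auto

lemma wdist_add:
  "wdist D (a + k) = bind_pmf (wdist D a) (\<lambda>ws. map_pmf (\<lambda>vs. ws @ vs) (wdist (\<lambda>j. D (a + j)) k))"
proof (induction k)
  case 0 then show ?case by (simp add: bind_return_pmf')
next
  case (Suc k)
  show ?case
    by (simp add: Suc bind_assoc_pmf bind_map_pmf map_bind_pmf map_pmf_comp)
qed

definition all1 :: "nat \<Rightarrow> real list \<Rightarrow> real" where
  "all1 k vs = (if \<forall>j<k. vs ! j = 1 then 1 else 0)"

lemma exp_all1:
  assumes p: "0 \<le> p" "p \<le> 1"
  shows "measure_pmf.expectation (wdist (\<lambda>_. dB p) k) (all1 k) = p ^ k"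
proof (induction k)
  case 0 then show ?case by (simp add: all1_def)
next
  case (Suc k)
  have fr: "finite (set_pmf (wdist (\<lambda>_. dB p) k))" by (intro wdist_fin fin_dB)
  have "measure_pmf.expectation (wdist (\<lambda>_. dB p) (Suc k)) (all1 (Suc k))
     = measure_pmf.expectation (wdist (\<lambda>_. dB p) k) (\<lambda>vs. measure_pmf.expectation (map_pmf (\<lambda>w. vs @ [w]) (dB p)) (all1 (Suc k)))"
    by (simp only: wdist.simps, rule fin_exp_bind[OF fr]) (simp add: fin_dB)
  also have "\<dots> = measure_pmf.expectation (wdist (\<lambda>_. dB p) k) (\<lambda>vs. all1 k vs * p)"
  proof (rule exp_cong_pmf)
    fix vs assume "vs \<in> set_pmf (wdist (\<lambda>_. dB p) k)"
    then have l: "length vs = k" using wdist_inv by blast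
    have a1: "all1 (Suc k) (vs @ [1]) = all1 k vs" using l
      by (auto simp: all1_def nth_append less_Suc_eq)
    have a0: "all1 (Suc k) (vs @ [0]) = 0" using l
      by (auto simp: all1_def nth_append less_Suc_eq)
    show "measure_pmf.expectation (map_pmf (\<lambda>w. vs @ [w]) (dB p)) (all1 (Suc k)) = all1 k vs * p"
      using exp_dB[OF p, of "\<lambda>w. all1 (Suc k) (vs @ [w])"] a1 a0 by simp
  qed
  also have "\<dots> = p ^ Suc k" using Suc by (simp add: mult.commute)
  finally show ?case .
qed

definition nf :: "nat \<Rightarrow> nat \<Rightarrow> real list \<Rightarrow> real" where
  "nf s m ws = (if \<exists>b<m. \<forall>j\<in>{b * s..<b * s+s}. ws ! j = 1 then 0 else 1)"

lemma nf_app: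
  assumes "length ws = m * s" "length vs = s"
  shows "nf s (Suc m) (ws @ vs) = nf s m ws * (1 - all1 s vs)"
proof -
  have A: "(\<forall>j\<in>{b * s..<b * s+s}. (ws @ vs) ! j = 1) = (\<forall>j\<in>{b * s..<b * s+s}. ws ! j = 1)" if "b < m" for b
  proof -
    have "b * s + s \<le> m * s" using that by (metis Suc_leI mult_Suc mult_le_mono1 add.commute)
    then show ?thesis using assms by (auto simp: nth_append)
  qed
  have B: "(\<forall>j\<in>{m * s..<m * s+s}. (ws @ vs) ! j = 1) = (\<forall>j<s. vs ! j = 1)"
  proof
    assume h: "\<forall>j\<in>{m * s..<m * s+s}. (ws @ vs) ! j = 1"
    show "\<forall>j<s. vs ! j = 1"
    proof (intro allI impI)
      fix j assume "j < s"
      then have "(ws @ vs) ! (m * s + j) = 1" using h by auto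
      then show "vs ! j = 1" using assms by (simp add: nth_append)
    qed
  next
    assume h: "\<forall>j<s. vs ! j = 1"
    show "\<forall>j\<in>{m * s..<m * s+s}. (ws @ vs) ! j = 1"
    proof
      fix j assume "j \<in> {m * s..<m * s+s}"
      then show "(ws @ vs) ! j = 1" using h assms by (auto simp: nth_append)
    qed
  qed
  have "(\<exists>b<Suc m. \<forall>j\<in>{b * s..<b * s+s}. (ws @ vs) ! j = 1) =
        ((\<exists>b<m. \<forall>j\<in>{b * s..<b * s+s}. ws ! j = 1) \<or> (\<forall>j<s. vs ! j = 1))"
    using A B by (auto simp: less_Suc_eq)
  then show ?thesis by (auto simp: nf_def all1_def)
qed

lemma exp_nf:
  assumes p: "0 \<le> p" "p \<le> 1" and mm: "m' \<le> m"
  shows "measure_pmf.expectation (wdist (Dinst s m p r H) (m' * s)) (nf s m') = (1 - p ^ s) ^ m'"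
  using mm
proof (induction m')
  case 0 then show ?case by (simp add: nf_def)
next
  case (Suc m')
  let ?D = "Dinst s m p r H"
  have fr: "finite (set_pmf (wdist ?D (m' * s)))" by (intro wdist_fin fin_Dinst)
  have c: "wdist (\<lambda>j. ?D (m' * s + j)) s = wdist (\<lambda>_. dB p) s"
  proof (rule wdist_cong)
    fix j assume "j < s"
    then have "m' * s + j < m * s" using Suc.prems
      by (metis add_less_cancel_left le_trans mult_Suc mult_le_mono1 not_le add.commute Suc_leI less_le_not_le)
    then show "?D (m' * s + j) = dB p" by (simp add: Dinst_def)
  qed
  have "measure_pmf.expectation (wdist ?D (Suc m' * s)) (nf s (Suc m'))
     = measure_pmf.expectation (wdist ?D (m' * s)) (\<lambda>ws. measure_pmf.expectation (map_pmf (\<lambda>vs. ws @ vs) (wdist (\<lambda>_. dB p) s)) (nf s (Suc m')))"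
    unfolding mult_Suc add.commute[of s] wdist_add c
    by (rule fin_exp_bind[OF fr]) (simp add: wdist_fin fin_dB)
  also have "\<dots> = measure_pmf.expectation (wdist ?D (m' * s)) (\<lambda>ws. nf s m' ws * (1 - p ^ s))"
  proof (rule exp_cong_pmf)
    fix ws assume "ws \<in> set_pmf (wdist ?D (m' * s))"
    then have l: "length ws = m' * s" using wdist_inv by blast
    have "measure_pmf.expectation (map_pmf (\<lambda>vs. ws @ vs) (wdist (\<lambda>_. dB p) s)) (nf s (Suc m'))
       = measure_pmf.expectation (wdist (\<lambda>_. dB p) s) (\<lambda>vs. nf s (Suc m') (ws @ vs))"
      by simp
    also have "\<dots> = measure_pmf.expectation (wdist (\<lambda>_. dB p) s) (\<lambda>vs. nf s m' ws * (1 - all1 s vs))"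
    proof (rule exp_cong_pmf)
      fix vs assume "vs \<in> set_pmf (wdist (\<lambda>_. dB p) s)"
      then have "length vs = s" using wdist_inv by blast
      then show "nf s (Suc m') (ws @ vs) = nf s m' ws * (1 - all1 s vs)" by (rule nf_app[OF l])
    qed
    also have "\<dots> = nf s m' ws * (1 - p ^ s)"
      using exp_all1[OF p, of s]
      by (simp add: integrable_measure_pmf_finite wdist_fin fin_dB)
    finally show "measure_pmf.expectation (map_pmf (\<lambda>vs. ws @ vs) (wdist (\<lambda>_. dB p) s)) (nf s (Suc m')) = nf s m' ws * (1 - p ^ s)" .
  qed
  also have "\<dots> = (1 - p ^ s) ^ Suc m'" using Suc by (simp add: mult.commute)
  finally show ?case .
qed



lemma blkF_finite: "finite (blkF s m)"
  by (rule finite_subset[OF blkF_fin]) simp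

lemma setval_le_opt: "finite F \<Longrightarrow> S \<in> F \<Longrightarrow> setval ws S \<le> opt F ws"
  unfolding opt_def by (rule Max_ge) auto

lemma opt_le: "finite F \<Longrightarrow> F \<noteq> {} \<Longrightarrow> (\<And>S. S \<in> F \<Longrightarrow> setval ws S \<le> c) \<Longrightarrow> opt F ws \<le> c"
  unfolding opt_def by (rule Max.boundedI) auto

lemma ratio_le1: "0 \<le> a \<Longrightarrow> a \<le> b \<Longrightarrow> ratio a b \<le> 1"
  unfolding ratio_def by auto

lemma ratio_le_div: "0 \<le> a \<Longrightarrow> 0 < t \<Longrightarrow> t \<le> b \<Longrightarrow> ratio a b \<le> a / t"
  unfolding ratio_def by (auto intro!: divide_left_mono)

lemma setval_nonneg: "(\<And>j. j \<in> S \<Longrightarrow> 0 \<le> ws ! j) \<Longrightarrow> 0 \<le> setval ws S"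
  unfolding setval_def by (rule sum_nonneg) auto

context
  fixes s m :: nat and p r H :: real
  assumes s: "0 < s" and p: "0 \<le> p" "p \<le> 1" and r: "0 \<le> r" "r \<le> 1" and H: "0 < H"
begin

abbreviation "DD \<equiv> Dinst s m p r H"
abbreviation "FF \<equiv> blkF s m"
abbreviation "NN \<equiv> m * s"

lemma ws_vals:
  assumes "length ws = Suc NN" "\<forall>j<Suc NN. ws ! j \<in> set_pmf (DD j)"
  shows "\<forall>j<NN. ws ! j = 0 \<or> ws ! j = 1" "ws ! NN = 0 \<or> ws ! NN = H"
proof -
  show "\<forall>j<NN. ws ! j = 0 \<or> ws ! j = 1"
  proof (intro allI impI)
    fix j assume j: "j < NN"
    have "ws ! j \<in> set_pmf (DD j)" using assms(2) j by simp
    then have "ws ! j \<in> set_pmf (dB p)" using j by (simp add: Dinst_def)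
    then show "ws ! j = 0 \<or> ws ! j = 1" using set_dB[of p] by blast
  qed
  have "ws ! NN \<in> set_pmf (Dz r H)" using assms(2) by (auto simp: Dinst_def)
  then show "ws ! NN = 0 \<or> ws ! NN = H" using set_Dz[of r H] by blast
qed

lemma last_exp:
  fixes g :: "real list \<Rightarrow> real"
  shows "measure_pmf.expectation (wdist DD (Suc NN)) g =
     measure_pmf.expectation (wdist DD NN) (\<lambda>ws. g (ws @ [H]) * r + g (ws @ [0]) * (1 - r))"
proof -
  have fr: "finite (set_pmf (wdist DD NN))" by (intro wdist_fin fin_Dinst)
  have "measure_pmf.expectation (wdist DD (Suc NN)) g =
     measure_pmf.expectation (wdist DD NN) (\<lambda>ws. measure_pmf.expectation (map_pmf (\<lambda>w. ws @ [w]) (DD NN)) g)"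
    by (simp only: wdist.simps, rule fin_exp_bind[OF fr]) (simp add: fin_Dinst)
  also have "\<dots> = measure_pmf.expectation (wdist DD NN) (\<lambda>ws. g (ws @ [H]) * r + g (ws @ [0]) * (1 - r))"
    using exp_Dz[OF r] by (simp add: Dinst_def)
  finally show ?thesis .
qed

lemma z_exp: "measure_pmf.expectation (wdist DD (Suc NN)) (\<lambda>ws. if ws ! NN = 0 then 0 else 1) = r"
proof -
  have "measure_pmf.expectation (wdist DD (Suc NN)) (\<lambda>ws. if ws ! NN = 0 then 0 else 1)
     = measure_pmf.expectation (wdist DD NN) (\<lambda>_. r)"
    unfolding last_exp
  proof (rule exp_cong_pmf)
    fix ws assume "ws \<in> set_pmf (wdist DD NN)"
    then have "length ws = NN" using wdist_inv by blast
    then show "(if (ws @ [H]) ! NN = 0 then 0 else 1) * r + (if (ws @ [0]) ! NN = 0 then 0 else 1) * (1 - r) = r"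
      using H by (simp add: nth_append)
  qed
  then show ?thesis by simp
qed

lemma wN_exp: "measure_pmf.expectation (wdist DD (Suc NN)) (\<lambda>ws. ws ! NN) = H * r"
proof -
  have "measure_pmf.expectation (wdist DD (Suc NN)) (\<lambda>ws. ws ! NN)
     = measure_pmf.expectation (wdist DD NN) (\<lambda>_. H * r)"
    unfolding last_exp
  proof (rule exp_cong_pmf)
    fix ws assume "ws \<in> set_pmf (wdist DD NN)"
    then have "length ws = NN" using wdist_inv by blast
    then show "(ws @ [H]) ! NN * r + (ws @ [0]) ! NN * (1 - r) = H * r" by (simp add: nth_append)
  qed
  then show ?thesis by simp
qed

lemma nf_exp: "measure_pmf.expectation (wdist DD (Suc NN)) (nf s m) = (1 - p ^ s) ^ m"
proof -
  have "measure_pmf.expectation (wdist DD (Suc NN)) (nf s m)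
     = measure_pmf.expectation (wdist DD NN) (nf s m)"
    unfolding last_exp
  proof (rule exp_cong_pmf)
    fix ws assume "ws \<in> set_pmf (wdist DD NN)"
    then have l: "length ws = NN" using wdist_inv by blast
    have "nf s m (ws @ [x]) = nf s m ws" for x
    proof -
      have "(\<forall>j\<in>{b * s..<b * s+s}. (ws @ [x]) ! j = 1) = (\<forall>j\<in>{b * s..<b * s+s}. ws ! j = 1)" if "b < m" for b
      proof -
        have "b * s + s \<le> m * s" using that by (metis Suc_leI mult_Suc mult_le_mono1 add.commute)
        then show ?thesis using l by (auto simp: nth_append)
      qed
      then have "(\<exists>b<m. \<forall>j\<in>{b * s..<b * s+s}. (ws @ [x]) ! j = 1) = (\<exists>b<m. \<forall>j\<in>{b * s..<b * s+s}. ws ! j = 1)"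
        by blast
      then show ?thesis unfolding nf_def by simp
    qed
    then show "nf s m (ws @ [H]) * r + nf s m (ws @ [0]) * (1 - r) = nf s m ws" by (simp add: algebra_simps)
  qed
  also have "\<dots> = (1 - p ^ s) ^ m" using exp_nf[OF p, of m m s r H] by simp
  finally show ?thesis .
qed

lemma ratio_pt:
  assumes x: "(ws, S) \<in> set_pmf (run q FF DD (Suc NN))"
  shows "ratio (setval ws S) (opt FF ws) \<le>
     (if ws ! NN = 0 then 0 else 1) + setval ws (S \<inter> {..<NN}) / real s + nf s m ws"
proof -
  have inv: "length ws = Suc NN" "S \<subseteq> {..<Suc NN}" "S \<in> FF" "\<forall>j<Suc NN. ws ! j \<in> set_pmf (DD j)"
    using run_inv[OF _ x] by (auto simp: blkF_def)
  note vals = ws_vals[OF inv(1) inv(4)]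
  have nn: "0 \<le> ws ! j" if "j < Suc NN" for j
    using vals H that by (cases "j < NN") (auto simp: less_Suc_eq)
  have A0: "0 \<le> setval ws S" using inv(2) nn by (intro setval_nonneg) auto
  have AB: "setval ws S \<le> opt FF ws" by (rule setval_le_opt[OF blkF_finite inv(3)])
  have T0: "0 \<le> setval ws (S \<inter> {..<NN}) / real s" using inv(2) nn by (intro divide_nonneg_nonneg setval_nonneg) auto
  have nf0: "0 \<le> nf s m ws" by (simp add: nf_def)
  show ?thesis
  proof (cases "ws ! NN = 0 \<and> nf s m ws = 0")
    case False
    have "nf s m ws = 0 \<or> nf s m ws = 1" by (simp add: nf_def)
    then have "1 \<le> (if ws ! NN = 0 then 0 else 1) + nf s m ws" using False by auto
    then show ?thesis using ratio_le1[OF A0 AB] T0 by linarith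
  next
    case True
    have "\<exists>b<m. \<forall>j\<in>{b * s..<b * s+s}. ws ! j = 1"
    proof (rule ccontr)
      assume "\<not> (\<exists>b<m. \<forall>j\<in>{b * s..<b * s+s}. ws ! j = 1)"
      then have "nf s m ws = 1" unfolding nf_def by simp
      with True show False by simp
    qed
    then obtain b where b: "b < m" "\<forall>j\<in>{b * s..<b * s+s}. ws ! j = 1" by blast
    have "{b * s..<b * s+s} \<in> FF" using b(1) by (auto simp: blkF_def)
    then have "setval ws {b * s..<b * s+s} \<le> opt FF ws" by (rule setval_le_opt[OF blkF_finite])
    moreover have "setval ws {b * s..<b * s+s} = real s" using b(2) by (simp add: setval_def)
    ultimately have sB: "real s \<le> opt FF ws" by simp
    have "setval ws S = setval ws (S \<inter> {..<NN})"
      unfolding setval_def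
    proof (rule sum.mono_neutral_right)
      show "finite S" using inv(2) finite_subset by blast
      show "\<forall>i\<in>S - S \<inter> {..<NN}. ws ! i = 0" using inv(2) True by (auto simp: less_Suc_eq)
    qed auto
    then have "ratio (setval ws S) (opt FF ws) \<le> setval ws (S \<inter> {..<NN}) / real s"
      using ratio_le_div[OF A0 _ sB] s by simp
    then show ?thesis using True by simp
  qed
qed

lemma trunc_exp:
  "measure_pmf.expectation (run q FF DD (Suc NN)) (\<lambda>x. setval (fst x) (snd x \<inter> {..<NN}))
   = measure_pmf.expectation (run q FF DD NN) (\<lambda>x. setval (fst x) (snd x))"
  apply (subst run_step_exp)
   apply (rule fin_Dinst)
  apply (rule exp_cong_pmf)
proof (clarsimp split: prod.splits)
  fix ws S assume x: "(ws, S) \<in> set_pmf (run q FF DD NN)"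
  have inv: "length ws = NN" "S \<subseteq> {..<NN}" using run_inv[OF _ x] by (auto simp: blkF_def)
  have "\<And>w c. setval (ws @ [w]) ((if c \<and> insert NN S \<in> FF then insert NN S else S) \<inter> {..<NN}) = setval ws S"
  proof -
    fix w c
    have "(if c \<and> insert NN S \<in> FF then insert NN S else S) \<inter> {..<NN} = S" using inv(2) by auto
    then show "setval (ws @ [w]) ((if c \<and> insert NN S \<in> FF then insert NN S else S) \<inter> {..<NN}) = setval ws S"
      using setval_app[of S ws w] inv by simp
  qed
  then show "measure_pmf.expectation (DD NN) (\<lambda>w. measure_pmf.expectation (bernoulli_pmf (q ws S w))
          (\<lambda>b. setval (ws @ [w]) ((if b \<and> insert NN S \<in> FF then insert NN S else S) \<inter> {..<NN}))) = setval ws S"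
    by simp
qed

lemma EoR_alg_bound:
  "EoR_alg (Suc NN) FF DD q \<le> r + (1 + real (s - 1) * p) / real s + (1 - p ^ s) ^ m"
proof -
  let ?R = "run q FF DD (Suc NN)"
  have fr: "finite (set_pmf ?R)" by (intro run_fin fin_Dinst)
  have "EoR_alg (Suc NN) FF DD q \<le> measure_pmf.expectation ?R (\<lambda>x.
      ((\<lambda>ws. if ws ! NN = 0 then 0 else 1) (fst x) + setval (fst x) (snd x \<inter> {..<NN}) / real s) + nf s m (fst x))"
    unfolding EoR_alg_def
    apply (rule exp_mono_pmf[OF fr])
    subgoal for x using ratio_pt[of "fst x" "snd x" q] by (cases x) simp
    done
  also have "\<dots> = (measure_pmf.expectation ?R (\<lambda>x. (\<lambda>ws. if ws ! NN = 0 then 0 else 1) (fst x))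
      + measure_pmf.expectation ?R (\<lambda>x. setval (fst x) (snd x \<inter> {..<NN})) / real s)
      + measure_pmf.expectation ?R (\<lambda>x. nf s m (fst x))"
    by (simp only: Bochner_Integration.integral_add[OF integrable_measure_pmf_finite[OF fr] integrable_measure_pmf_finite[OF fr]] integral_divide_zero)
  also have "\<dots> = (r + measure_pmf.expectation (run q FF DD NN) (\<lambda>x. setval (fst x) (snd x)) / real s)
      + (1 - p ^ s) ^ m"
    using run_exp_fst[of q FF DD "Suc NN" "\<lambda>ws. if ws ! NN = 0 then 0 else 1"] z_exp
    unfolding run_exp_fst trunc_exp nf_exp by (simp del: run.simps)
  also have "\<dots> \<le> r + (1 + real (s - 1) * p) / real s + (1 - p ^ s) ^ m"
    using alg_bound[OF s p, of q m r H] s by (simp add: divide_right_mono)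
  finally show ?thesis .
qed

end



lemma bern0: "bernoulli_pmf 0 = return_pmf False"
  by (rule pmf_eqI) (case_tac i, auto)

lemma bern1: "bernoulli_pmf 1 = return_pmf True"
  by (rule pmf_eqI) (case_tac i, auto)

definition q0 :: "nat \<Rightarrow> online_alg" where
  "q0 N = (\<lambda>ws S w. if length ws = N then 1 else 0)"

context
  fixes s m :: nat and p r H :: real
  assumes s: "0 < s" and p: "0 \<le> p" "p \<le> 1" and r: "0 < r" "r \<le> 1" and H: "0 < H"
begin

abbreviation "DD' \<equiv> Dinst s m p r H"
abbreviation "FF' \<equiv> blkF s m"
abbreviation "NN' \<equiv> m * s"

lemma run_q0: "i \<le> NN' \<Longrightarrow> x \<in> set_pmf (run (q0 NN') FF' DD' i) \<Longrightarrow> snd x = {}"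
proof (induction i arbitrary: x)
  case 0 then show ?case by simp
next
  case (Suc i)
  then obtain ws S w b where x: "(ws, S) \<in> set_pmf (run (q0 NN') FF' DD' i)"
    "b \<in> set_pmf (bernoulli_pmf (q0 NN' ws S w))"
    "x = (ws @ [w], if b \<and> insert i S \<in> FF' then insert i S else S)"
    by (auto simp: set_bind_pmf split: prod.splits)
  have "length ws = i" using run_inv[OF _ x(1)] by (auto simp: blkF_def)
  then have "q0 NN' ws S w = 0" using Suc.prems by (simp add: q0_def)
  then have "\<not> b" using x(2) by (simp add: bern0)
  moreover have "S = {}" using Suc.IH[OF _ x(1)] Suc.prems by simp
  ultimately show ?case using x(3) by simp
qed

lemma alg_q0: "measure_pmf.expectation (run (q0 NN') FF' DD' (Suc NN')) (\<lambda>x. setval (fst x) (snd x)) = H * r"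
proof -
  have "measure_pmf.expectation (run (q0 NN') FF' DD' (Suc NN')) (\<lambda>x. setval (fst x) (snd x))
     = measure_pmf.expectation (run (q0 NN') FF' DD' NN') (\<lambda>_. H * r)"
    apply (subst run_step_exp)
     apply (rule fin_Dinst)
    apply (rule exp_cong_pmf)
  proof (clarsimp split: prod.splits)
    fix ws S assume x: "(ws, S) \<in> set_pmf (run (q0 NN') FF' DD' NN')"
    have l: "length ws = NN'" using run_inv[OF _ x] by (auto simp: blkF_def)
    have S: "S = {}" using run_q0[OF _ x] by simp
    have ins: "insert NN' {} \<in> FF'" by (simp add: blkF_def)
    have "\<And>w. setval (ws @ [w]) {NN'} = w" using l by (simp add: setval_def nth_append)
    then show "measure_pmf.expectation (DD' NN') (\<lambda>w. measure_pmf.expectation (bernoulli_pmf (q0 NN' ws S w))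
          (\<lambda>b. setval (ws @ [w]) (if b \<and> insert NN' S \<in> FF' then insert NN' S else S))) = H * r"
      using l S ins exp_Dz[where f="\<lambda>w. w" and r=r and H=H] r by (simp add: q0_def bern1 Dinst_def)
  qed
  then show ?thesis by simp
qed

lemma opt_bounds:
  assumes "ws \<in> set_pmf (wdist DD' (Suc NN'))"
  shows "ws ! NN' \<le> opt FF' ws" "opt FF' ws \<le> real s + ws ! NN'"
proof -
  have l: "length ws = Suc NN'" "\<forall>j<Suc NN'. ws ! j \<in> set_pmf (DD' j)" using wdist_inv[OF assms] by auto
  note vals = ws_vals[OF s p less_imp_le[OF r(1)] r(2) H l]
  have nN: "0 \<le> ws ! NN'" using vals(2) H by auto
  have "{NN'} \<in> FF'" by (simp add: blkF_def)
  then have "setval ws {NN'} \<le> opt FF' ws" by (rule setval_le_opt[OF blkF_finite])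
  then show "ws ! NN' \<le> opt FF' ws" by (simp add: setval_def)
  show "opt FF' ws \<le> real s + ws ! NN'"
  proof (rule opt_le[OF blkF_finite])
    show "FF' \<noteq> {}" by (auto simp: blkF_def)
    fix S assume "S \<in> FF'"
    then consider b where "b < m" "S \<subseteq> {b * s..<b * s+s}" | "S \<subseteq> {NN'}" unfolding blkF_def by auto
    then show "setval ws S \<le> real s + ws ! NN'"
    proof cases
      case 1
      have "b * s + s \<le> m * s" using 1(1) by (metis Suc_leI mult_Suc mult_le_mono1 add.commute)
      then have lt: "\<forall>j\<in>S. j < NN'" using 1(2) by auto
      have "setval ws S \<le> real (card S) * 1"
        unfolding setval_def using lt vals(1) by (intro sum_bounded_above) force
      also have "card S \<le> card {b * s..<b * s+s}" using 1(2) by (intro card_mono) auto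
      then have "real (card S) * 1 \<le> real s" by simp
      finally show ?thesis using nN by simp
    next
      case 2
      then have "S = {} \<or> S = {NN'}" by auto
      then show ?thesis using nN by (auto simp: setval_def)
    qed
  qed
qed

lemma Eopt: "H * r \<le> measure_pmf.expectation (wdist DD' (Suc NN')) (opt FF')"
   "measure_pmf.expectation (wdist DD' (Suc NN')) (opt FF') \<le> real s + H * r"
proof -
  have fr: "finite (set_pmf (wdist DD' (Suc NN')))" by (intro wdist_fin fin_Dinst)
  have "measure_pmf.expectation (wdist DD' (Suc NN')) (\<lambda>ws. ws ! NN') \<le> measure_pmf.expectation (wdist DD' (Suc NN')) (opt FF')"
    by (rule exp_mono_pmf[OF fr]) (rule opt_bounds(1))
  then show "H * r \<le> measure_pmf.expectation (wdist DD' (Suc NN')) (opt FF')"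
    using wN_exp[OF s p less_imp_le[OF r(1)] r(2) H] by simp
  have "measure_pmf.expectation (wdist DD' (Suc NN')) (opt FF') \<le> measure_pmf.expectation (wdist DD' (Suc NN')) (\<lambda>ws. real s + ws ! NN')"
    by (rule exp_mono_pmf[OF fr]) (rule opt_bounds(2))
  also have "\<dots> = real s + H * r"
    using wN_exp[OF s p less_imp_le[OF r(1)] r(2) H]
    by (subst Bochner_Integration.integral_add) (auto simp del: wdist.simps intro: integrable_measure_pmf_finite[OF fr])
  finally show "measure_pmf.expectation (wdist DD' (Suc NN')) (opt FF') \<le> real s + H * r" .
qed

lemma RoE_le1: "RoE_alg (Suc NN') FF' DD' q \<le> 1"
proof -
  have pos: "0 < measure_pmf.expectation (wdist DD' (Suc NN')) (opt FF')"
    using Eopt(1) H r by (meson less_le_trans mult_pos_pos)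
  have fr: "finite (set_pmf (run q FF' DD' (Suc NN')))" by (intro run_fin fin_Dinst)
  have "measure_pmf.expectation (run q FF' DD' (Suc NN')) (\<lambda>(ws, S). setval ws S)
     \<le> measure_pmf.expectation (run q FF' DD' (Suc NN')) (\<lambda>x. opt FF' (fst x))"
    apply (rule exp_mono_pmf[OF fr])
    subgoal for x using run_inv[of FF' x q DD' "Suc NN'"] setval_le_opt[OF blkF_finite, of "snd x" s m "fst x"]
      by (cases x) (auto simp: blkF_def)
    done
  also have "\<dots> = measure_pmf.expectation (wdist DD' (Suc NN')) (opt FF')" by (rule run_exp_fst)
  finally show ?thesis unfolding RoE_alg_def using pos by simp
qed

lemma RoE_q0: "H * r / (real s + H * r) \<le> RoE_alg (Suc NN') FF' DD' (q0 NN')"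
proof -
  have e: "measure_pmf.expectation (run (q0 NN') FF' DD' (Suc NN')) (\<lambda>(ws, S). setval ws S) = H * r"
  proof -
    have "(\<lambda>(ws, S). setval ws S) = (\<lambda>x. setval (fst x) (snd x))" by auto
    then show ?thesis using alg_q0 by (simp del: run.simps)
  qed
  have pos: "0 < H * r" using H r by simp
  show ?thesis unfolding RoE_alg_def e
    using Eopt pos by (intro divide_left_mono) (auto intro: mult_pos_pos less_le_trans)
qed

end



theorem corollary3:
  shows "\<exists>c::real. c > 0 \<and>
           (\<forall>\<epsilon>::real. \<epsilon> > 0 \<longrightarrow>
              (\<exists>n F D. valid_instance n F D \<and> EoR n F D \<le> \<epsilon> \<and> RoE n F D \<ge> c))"
proof (intro exI[of _ "1/2"] conjI allI impI)
  show "(0::real) < 1/2" by simp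
  fix \<epsilon> :: real assume e: "0 < \<epsilon>"
  define r where "r = min (1/2) (\<epsilon>/4)"
  define s where "s = nat \<lceil>8/\<epsilon>\<rceil> + 1"
  define p where "p = 1 / real s"
  define H where "H = real s / r"
  have r: "0 < r" "r \<le> 1" "r \<le> \<epsilon>/4" using e by (auto simp: r_def)
  have s: "0 < s" by (simp add: s_def)
  have s8: "8/\<epsilon> \<le> real s" unfolding s_def by linarith
  have p: "0 \<le> p" "p \<le> 1" using s by (auto simp: p_def)
  have H: "0 < H" using r s by (simp add: H_def)
  have ps: "0 < p ^ s" using s by (simp add: p_def)
  obtain m where m: "(1 - p ^ s) ^ m < \<epsilon>/4"
    using real_arch_pow_inv[of "\<epsilon>/4" "1 - p ^ s"] e ps by auto
  show "\<exists>n F D. valid_instance n F D \<and> EoR n F D \<le> \<epsilon> \<and> 1/2 \<le> RoE n F D"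
  proof (intro exI conjI)
    show "valid_instance (Suc (m * s)) (blkF s m) (Dinst s m p r H)"
      using valid[of H m s p r] H by simp
    have b1: "(1 + real (s - 1) * p) / real s \<le> 2 / real s"
    proof -
      have "real (s - 1) * p \<le> 1" using s by (simp add: p_def of_nat_diff)
      then show ?thesis using s by (intro divide_right_mono) auto
    qed
    have b2: "2 / real s \<le> \<epsilon>/4"
    proof -
      have "8 \<le> \<epsilon> * real s" using s8 e by (simp add: field_simps)
      then show ?thesis using s e by (simp add: field_simps)
    qed
    show "EoR (Suc (m * s)) (blkF s m) (Dinst s m p r H) \<le> \<epsilon>"
      unfolding EoR_def
    proof (rule cSUP_least)
      fix q
      show "EoR_alg (Suc (m * s)) (blkF s m) (Dinst s m p r H) q \<le> \<epsilon>"
        using EoR_alg_bound[OF s p less_imp_le[OF r(1)] r(2) H, where q=q and m=m] b1 b2 m r(3) e by linarith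
    qed simp
    have hr: "H * r = real s" using r by (simp add: H_def)
    have "1/2 = H * r / (real s + H * r)" using hr s by simp
    also have "\<dots> \<le> RoE_alg (Suc (m * s)) (blkF s m) (Dinst s m p r H) (q0 (m * s))"
      by (rule RoE_q0[OF s p r(1,2) H])
    also have "\<dots> \<le> RoE (Suc (m * s)) (blkF s m) (Dinst s m p r H)"
      unfolding RoE_def
    proof (rule cSUP_upper)
      show "bdd_above (range (RoE_alg (Suc (m * s)) (blkF s m) (Dinst s m p r H)))"
        using RoE_le1[OF s p r(1,2) H] by (intro bdd_aboveI) auto
    qed simp
    finally show "1/2 \<le> RoE (Suc (m * s)) (blkF s m) (Dinst s m p r H)" .
  qed
qed

end
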